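(* Let $K\subset\mathbb{R}^n$ and $C\subset\mathbb{R}^m$ be nonempty, convex, closed and bounded sets, and let $f,h:\mathbb{R}^n\times\mathbb{R}^m\to\mathbb{R}$ be continuous functions such that, for every $y\in K$, $f(y,\cdot)$ and $h(y,\cdot)$ are convex, and such that $f$ takes only positive values. For every $\varepsilon>0$, the problem $(\mathcal{P}_\varepsilon)$: maximize $f(y,x)$ subject to $y\in K$, $x\in\mathcal{S}_\varepsilon(y)$, admits at least one optimal solution $y_\varepsilon\in K$.
   Context: For $y\in K$ and $\varepsilon>0$, $\mathcal{S}_\varepsilon(y)=\operatorname{argmin}\{h(y,z)+\varepsilon f^2(y,z)\mid z\in C\}$, where $f^2=(f)^2$. A point $y_\varepsilon\in K$ is an optimal solution of $(\mathcal{P}_\varepsilon)$ if $f(y_\varepsilon,x')\ge f(y,x)$ for all $x'\in\mathcal{S}_\varepsilon(y_\varepsilon)$, all $y\in K$ and all $x\in\mathcal{S}_\varepsilon(y)$ (the value $f(y,x)$ does not depend on the choice of $x\in\mathcal{S}_\varepsilon(y)$). *)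

theory Defs
  imports "HOL-Analysis.Analysis"
begin

definition S_eps :: "real \<Rightarrow> ('a \<times> 'b \<Rightarrow> real) \<Rightarrow> ('a \<times> 'b \<Rightarrow> real) \<Rightarrow> 'b set \<Rightarrow> 'a \<Rightarrow> 'b set" where
  "S_eps eps f h C y =
     {z \<in> C. \<forall>z'\<in>C. h (y, z) + eps * (f (y, z))\<^sup>2 \<le> h (y, z') + eps * (f (y, z'))\<^sup>2}"

definition optimal_P_eps :: "real \<Rightarrow> ('a \<times> 'b \<Rightarrow> real) \<Rightarrow> ('a \<times> 'b \<Rightarrow> real) \<Rightarrow> 'a set \<Rightarrow> 'b set \<Rightarrow> 'a \<Rightarrow> bool" where
  "optimal_P_eps eps f h K C ye \<longleftrightarrow>
     ye \<in> K \<and>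
     (\<forall>x'\<in>S_eps eps f h C ye. \<forall>y\<in>K. \<forall>x\<in>S_eps eps f h C y. f (ye, x') \<ge> f (y, x))"

end

theory Submission
  imports Defs
begin

lemma S_const:
  fixes f h :: "'a \<times> 'b::real_vector \<Rightarrow> real"
  assumes C: "convex C" and eps: "eps > 0"
    and cf: "convex_on UNIV (\<lambda>x. f (y, x))" and ch: "convex_on UNIV (\<lambda>x. h (y, x))"
    and pos: "\<And>p. f p > 0"
    and x1: "x1 \<in> S_eps eps f h C y" and x2: "x2 \<in> S_eps eps f h C y"
  shows "f (y, x1) = f (y, x2)"
proof (rule ccontr)
  assume ne: "f (y, x1) \<noteq> f (y, x2)"
  define m where "m = (1 - 1/2) *\<^sub>R x1 + (1/2::real) *\<^sub>R x2"
  have x1C: "x1 \<in> C" and x2C: "x2 \<in> C" using x1 x2 by (auto simp: S_eps_def)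
  have mC: "m \<in> C" unfolding m_def using C x1C x2C by (simp add: convexD)
  have hm: "h (y, m) \<le> (1 - 1/2) * h (y, x1) + (1/2) * h (y, x2)"
    unfolding m_def using convex_onD[OF ch, of "1/2" x1 x2] by simp
  have fm: "f (y, m) \<le> (1 - 1/2) * f (y, x1) + (1/2) * f (y, x2)"
    unfolding m_def using convex_onD[OF cf, of "1/2" x1 x2] by simp
  define a where "a = f (y, x1)"
  define b where "b = f (y, x2)"
  have "(f (y, m))\<^sup>2 \<le> ((a + b)/2)\<^sup>2"
    using fm pos[of "(y,m)"] unfolding a_def b_def
    by (intro power_mono) auto
  also have "\<dots> < (a\<^sup>2 + b\<^sup>2)/2"
    using ne unfolding a_def[symmetric] b_def[symmetric]
  proof -
    have "(a - b)\<^sup>2 > 0" using ne a_def b_def by simp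
    then show ?thesis by (simp add: power2_eq_square field_simps)
  qed
  finally have fm2: "(f (y, m))\<^sup>2 < (a\<^sup>2 + b\<^sup>2)/2" .
  have g1: "h (y, x1) + eps * a\<^sup>2 \<le> h (y, x2) + eps * b\<^sup>2"
    using x1 x2C unfolding S_eps_def a_def b_def by auto
  have g2: "h (y, x2) + eps * b\<^sup>2 \<le> h (y, x1) + eps * a\<^sup>2"
    using x2 x1C unfolding S_eps_def a_def b_def by auto
  have g3: "h (y, x1) + eps * a\<^sup>2 \<le> h (y, m) + eps * (f (y, m))\<^sup>2"
    using x1 mC unfolding S_eps_def a_def b_def by auto
  have "eps * (f (y, m))\<^sup>2 < eps * ((a\<^sup>2 + b\<^sup>2)/2)"
    using fm2 eps by simp
  then show False using g1 g2 g3 hm by (simp add: field_simps)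
qed

theorem theorem2p1:
  fixes K :: "(real ^ 'n) set" and C :: "(real ^ 'm) set"
    and f h :: "(real ^ 'n) \<times> (real ^ 'm) \<Rightarrow> real"
  assumes "K \<noteq> {}" "convex K" "closed K" "bounded K"
    and "C \<noteq> {}" "convex C" "closed C" "bounded C"
    and "continuous_on UNIV f" "continuous_on UNIV h"
    and "\<And>y. y \<in> K \<Longrightarrow> convex_on UNIV (\<lambda>x. f (y, x))"
    and "\<And>y. y \<in> K \<Longrightarrow> convex_on UNIV (\<lambda>x. h (y, x))"
    and "\<And>p. f p > 0"
  shows "\<forall>eps>0. \<exists>ye. optimal_P_eps eps f h K C ye"
proof (intro allI impI)
  fix eps :: real assume eps: "eps > 0"
  define g where "g = (\<lambda>p. h p + eps * (f p)\<^sup>2)"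
  have gc: "continuous_on UNIV g" unfolding g_def
    using assms(9,10) by (intro continuous_intros) auto
  define G where "G = {p. fst p \<in> K \<and> snd p \<in> C \<and> (\<forall>z\<in>C. g p \<le> g (fst p, z))}"
  have Geq: "G = (K \<times> C) \<inter> (\<Inter>z\<in>C. {p. g p \<le> g (fst p, z)})"
    unfolding G_def by auto
  have "closed (\<Inter>z\<in>C. {p. g p \<le> g (fst p, z)})"
  proof (intro closed_INT ballI)
    fix z
    show "closed {p. g p \<le> g (fst p, z)}"
      apply (rule closed_Collect_le)
       apply (rule continuous_on_subset[OF gc], simp)
      apply (rule continuous_on_compose2[OF gc], (intro continuous_intros), simp)
      done
  qed
  moreover have "compact (K \<times> C)"
    using assms(3,4,7,8) by (intro compact_Times) (auto simp: compact_eq_bounded_closed)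
  ultimately have Gc: "compact G" unfolding Geq
    by (intro compact_Int_closed)
  obtain y0 where y0: "y0 \<in> K" using assms(1) by auto
  have "\<exists>x\<in>C. \<forall>z\<in>C. g (y0, x) \<le> g (y0, z)"
    apply (rule continuous_attains_inf)
    using assms(5,7,8) apply (auto simp: compact_eq_bounded_closed)[2]
    apply (rule continuous_on_compose2[OF gc], (intro continuous_intros), simp)
    done
  then obtain x0 where "x0 \<in> C" "\<forall>z\<in>C. g (y0, x0) \<le> g (y0, z)" by auto
  then have "(y0, x0) \<in> G" using y0 unfolding G_def by auto
  then have Gne: "G \<noteq> {}" by auto
  obtain p where pG: "p \<in> G" and pmax: "\<forall>q\<in>G. f q \<le> f p"
    using continuous_attains_sup[OF Gc Gne continuous_on_subset[OF assms(9)]] by auto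
  obtain ye xe where p: "p = (ye, xe)" by (cases p)
  have SG: "x \<in> S_eps eps f h C y \<longleftrightarrow> (y, x) \<in> G" if "y \<in> K" for x y
    using that unfolding S_eps_def G_def g_def by auto
  have yeK: "ye \<in> K" using pG p unfolding G_def by auto
  have xeS: "xe \<in> S_eps eps f h C ye" using SG[OF yeK] pG p by auto
  show "\<exists>ye. optimal_P_eps eps f h K C ye"
  proof (intro exI)
    show "optimal_P_eps eps f h K C ye"
      unfolding optimal_P_eps_def
    proof (intro conjI yeK ballI)
      fix x' y x assume x': "x' \<in> S_eps eps f h C ye" and y: "y \<in> K"
        and x: "x \<in> S_eps eps f h C y"
      have "f (ye, x') = f (ye, xe)"
        using S_const[OF assms(6) eps assms(11)[OF yeK] assms(12)[OF yeK] assms(13) x' xeS] .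
      moreover have "f (y, x) \<le> f p" using pmax SG[OF y] x by auto
      ultimately show "f (y, x) \<le> f (ye, x')" using p by simp
    qed
  qed
qed

end
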